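(* Let $\mathcal{X}$ be a connected $n$-premaniplex with base flag $x_0$, let $(\mathcal{Y},\eta)$ be an $(n,m)$-voltage operator with $\mathcal{Y}$ connected and base flag $y_0$, let $N=\operatorname{Stab}_{\mathcal{C}^n}(x_0)$, $L=\operatorname{Stab}_{\mathcal{C}^m}(y_0)$, and let $\zeta:L\to\mathcal{C}^n$ be $\zeta(\omega)=\eta(W_\omega(y_0))$. Then $\operatorname{Stab}_{\mathcal{C}^m}(x_0,y_0)=\zeta^{-1}(N)$. In particular, if $\mathcal{X}\rtimes_\eta\mathcal{Y}$ is connected, it is isomorphic to the coset premaniplex $\mathcal{C}^m/\zeta^{-1}(N)$, with $(x_0,y_0)$ corresponding to the coset $\zeta^{-1}(N)$.
   Context: An $n$-premaniplex is an edge-coloured graph (semi-edges and parallel edges allowed) with colours $\{0,\dots,n-1\}$ such that every vertex (flag) is the start of exactly one dart of each colour, and for $|i-j|\ge2$ alternating $i,j$-paths of length 4 are closed; $x^i$ is the $i$-adjacent flag of $x$. $\mathcal{C}^n=\langle r_0,\dots,r_{n-1}\mid r_i^2,\ (r_ir_j)^2\ (|i-j|\ge2)\rangle$ acts on the left on flags by $r_ix=x^i$. For a subgroup $K\le\mathcal{C}^m$, the coset premaniplex $\mathcal{C}^m/K$ has flags the left cosets $\omega K$, with $(\omega K)^i=r_i\omega K$. For a flag $y$ of an $m$-premaniplex $\mathcal{Y}$ and $\omega\in\mathcal{C}^m$, $W_\omega(y)$ is the homotopy class of paths from $y$ whose colour sequence $i_1,\dots,i_k$ satisfies $r_{i_k}\cdots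 r_{i_1}=\omega$; these form the fundamental groupoid $\Pi(\mathcal{Y})$. A voltage assignment $\eta:\Pi(\mathcal{Y})\to\mathcal{C}^n$ satisfies $\eta(W_1W_2)=\eta(W_2)\eta(W_1)$; $(\mathcal{Y},\eta)$ is an $(n,m)$-voltage operator. $\mathcal{X}\rtimes_\eta\mathcal{Y}$ has flags $\mathcal{X}\times\mathcal{Y}$ and $(x,y)^i=(\eta(W_{r_i}(y))x,r_iy)$, $i\in\{0,\dots,m-1\}$; hence $\omega(x,y)=(\eta(W_\omega(y))x,\omega y)$. *)

theory Defs
  imports "HOL-Algebra.Coset"
begin

text \<open>Words over the generators r_0..r_{n-1}; the word [i1,...,ik] stands for
  r_{i1} r_{i2} ... r_{ik}.\<close>

definition words :: "nat \<Rightarrow> nat list set" where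
  "words n = {w. set w \<subseteq> {..<n}}"

inductive cox_eq :: "nat \<Rightarrow> nat list \<Rightarrow> nat list \<Rightarrow> bool" for n where
  refl:  "w \<in> words n \<Longrightarrow> cox_eq n w w"
| sym:   "cox_eq n u v \<Longrightarrow> cox_eq n v u"
| trans: "cox_eq n u v \<Longrightarrow> cox_eq n v w \<Longrightarrow> cox_eq n u w"
| invol: "u \<in> words n \<Longrightarrow> v \<in> words n \<Longrightarrow> i < n \<Longrightarrow>
          cox_eq n (u @ [i, i] @ v) (u @ v)"
| comm:  "u \<in> words n \<Longrightarrow> v \<in> words n \<Longrightarrow> i < n \<Longrightarrow> j < n \<Longrightarrow>
          i + 2 \<le> j \<or> j + 2 \<le> i \<Longrightarrow> cox_eq n (u @ [i, j, i, j] @ v) (u @ v)"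

definition cox_class :: "nat \<Rightarrow> nat list \<Rightarrow> nat list set" where
  "cox_class n w = {v. cox_eq n w v}"

definition cox_rep :: "nat list set \<Rightarrow> nat list" where
  "cox_rep A = (SOME w. w \<in> A)"

definition coxeter :: "nat \<Rightarrow> nat list set monoid" where
  "coxeter n = \<lparr> carrier = cox_class n ` words n,
                 mult = (\<lambda>A B. cox_class n (cox_rep A @ cox_rep B)),
                 one = cox_class n [] \<rparr>"

definition cox_gen :: "nat \<Rightarrow> nat \<Rightarrow> nat list set" where
  "cox_gen n i = cox_class n [i]"

text \<open>An n-premaniplex is given by its set of flags F and the adjacency maps
  adj i x = x^i (i < n). Every flag starts exactly one dart of each colour, so
  x^i is a function and (x^i)^i = x; semi-edges correspond to x^i = x.\<close>
definition premaniplex :: "nat \<Rightarrow> 'a set \<Rightarrow> (nat \<Rightarrow> 'a \<Rightarrow> 'a) \<Rightarrow> bool" where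
  "premaniplex n F adj \<longleftrightarrow>
     (\<forall>i<n. \<forall>x\<in>F. adj i x \<in> F \<and> adj i (adj i x) = x) \<and>
     (\<forall>i<n. \<forall>j<n. (i + 2 \<le> j \<or> j + 2 \<le> i) \<longrightarrow>
        (\<forall>x\<in>F. adj i (adj j (adj i (adj j x))) = x))"

text \<open>Action of a word: r_{i1}...r_{ik} x = x^{ik ... i1} (rightmost letter first).\<close>
definition word_act :: "(nat \<Rightarrow> 'a \<Rightarrow> 'a) \<Rightarrow> nat list \<Rightarrow> 'a \<Rightarrow> 'a" where
  "word_act adj w x = foldr adj w x"

definition cox_act :: "(nat \<Rightarrow> 'a \<Rightarrow> 'a) \<Rightarrow> nat list set \<Rightarrow> 'a \<Rightarrow> 'a" where
  "cox_act adj \<omega> x = word_act adj (cox_rep \<omega>) x"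

definition pm_connected :: "nat \<Rightarrow> 'a set \<Rightarrow> (nat \<Rightarrow> 'a \<Rightarrow> 'a) \<Rightarrow> bool" where
  "pm_connected n F adj \<longleftrightarrow> (\<forall>x\<in>F. \<forall>y\<in>F. \<exists>w\<in>words n. word_act adj w x = y)"

definition stab :: "nat \<Rightarrow> (nat \<Rightarrow> 'a \<Rightarrow> 'a) \<Rightarrow> 'a \<Rightarrow> nat list set set" where
  "stab n adj x = {\<omega> \<in> carrier (coxeter n). cox_act adj \<omega> x = x}"

definition pm_iso :: "nat \<Rightarrow> 'a set \<Rightarrow> (nat \<Rightarrow> 'a \<Rightarrow> 'a) \<Rightarrow> 'b set \<Rightarrow> (nat \<Rightarrow> 'b \<Rightarrow> 'b)
                       \<Rightarrow> ('a \<Rightarrow> 'b) \<Rightarrow> bool" where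
  "pm_iso m F adj G adj' \<phi> \<longleftrightarrow>
     bij_betw \<phi> F G \<and> (\<forall>i<m. \<forall>x\<in>F. \<phi> (adj i x) = adj' i (\<phi> x))"

definition coset_flags :: "nat \<Rightarrow> nat list set set \<Rightarrow> nat list set set set" where
  "coset_flags m K = {\<omega> <#\<^bsub>coxeter m\<^esub> K | \<omega>. \<omega> \<in> carrier (coxeter m)}"

definition coset_adj :: "nat \<Rightarrow> nat \<Rightarrow> nat list set set \<Rightarrow> nat list set set" where
  "coset_adj m i C = cox_gen m i <#\<^bsub>coxeter m\<^esub> C"

text \<open>The homotopy class W_\<omega>(y) of the fundamental groupoid is identified with the
  pair (y, \<omega>); concatenation W_\<omega>(y) W_\<nu>(\<omega> y) = W_{\<nu>\<omega>}(y). A voltage assignment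
  eta : Pi(Y) -> C^n with eta(W1 W2) = eta(W2) eta(W1) is thus a function
  eta y \<omega> satisfying eta y (\<nu>\<omega>) = eta (\<omega> y) \<nu> * eta y \<omega>.\<close>
definition voltage_assignment :: "nat \<Rightarrow> nat \<Rightarrow> 'b set \<Rightarrow> (nat \<Rightarrow> 'b \<Rightarrow> 'b)
      \<Rightarrow> ('b \<Rightarrow> nat list set \<Rightarrow> nat list set) \<Rightarrow> bool" where
  "voltage_assignment n m FY adjY \<eta> \<longleftrightarrow>
     (\<forall>y\<in>FY. \<forall>\<omega>\<in>carrier (coxeter m). \<eta> y \<omega> \<in> carrier (coxeter n)) \<and>
     (\<forall>y\<in>FY. \<forall>\<omega>\<in>carrier (coxeter m). \<forall>\<nu>\<in>carrier (coxeter m).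
        \<eta> y (\<nu> \<otimes>\<^bsub>coxeter m\<^esub> \<omega>) = \<eta> (cox_act adjY \<omega> y) \<nu> \<otimes>\<^bsub>coxeter n\<^esub> \<eta> y \<omega>)"

definition voltage_operator :: "nat \<Rightarrow> nat \<Rightarrow> 'b set \<Rightarrow> (nat \<Rightarrow> 'b \<Rightarrow> 'b)
      \<Rightarrow> ('b \<Rightarrow> nat list set \<Rightarrow> nat list set) \<Rightarrow> bool" where
  "voltage_operator n m FY adjY \<eta> \<longleftrightarrow>
     premaniplex m FY adjY \<and> voltage_assignment n m FY adjY \<eta>"

definition vprod_flags :: "'a set \<Rightarrow> 'b set \<Rightarrow> ('a \<times> 'b) set" where
  "vprod_flags FX FY = FX \<times> FY"

definition vprod_adj :: "nat \<Rightarrow> (nat \<Rightarrow> 'a \<Rightarrow> 'a) \<Rightarrow> (nat \<Rightarrow> 'b \<Rightarrow> 'b)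
      \<Rightarrow> ('b \<Rightarrow> nat list set \<Rightarrow> nat list set) \<Rightarrow> nat \<Rightarrow> 'a \<times> 'b \<Rightarrow> 'a \<times> 'b" where
  "vprod_adj m adjX adjY \<eta> i p =
     (cox_act adjX (\<eta> (snd p) (cox_gen m i)) (fst p), adjY i (snd p))"

end

theory Submission
  imports Defs
begin


lemma words_append[simp]: "u @ v \<in> words n \<longleftrightarrow> u \<in> words n \<and> v \<in> words n"
  by (auto simp: words_def)
lemma words_Cons[simp]: "i # v \<in> words n \<longleftrightarrow> i < n \<and> v \<in> words n"
  by (auto simp: words_def)
lemma words_Nil[simp]: "[] \<in> words n" by (auto simp: words_def)
lemma words_rev[simp]: "rev u \<in> words n \<longleftrightarrow> u \<in> words n" by (auto simp: words_def)

lemma cox_eq_words: "cox_eq n u v \<Longrightarrow> u \<in> words n \<and> v \<in> words n"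
  by (induction rule: cox_eq.induct) auto

lemma cox_eq_cong: "cox_eq n u v \<Longrightarrow> a \<in> words n \<Longrightarrow> b \<in> words n \<Longrightarrow> cox_eq n (a @ u @ b) (a @ v @ b)"
proof (induction rule: cox_eq.induct)
  case (refl w) then show ?case by (auto intro: cox_eq.refl)
next
  case (sym u v) then show ?case by (auto intro: cox_eq.sym)
next
  case (trans u v w) then show ?case by (auto intro: cox_eq.trans)
next
  case (invol u v i)
  have "cox_eq n ((a @ u) @ [i, i] @ (v @ b)) ((a @ u) @ (v @ b))"
    using invol by (intro cox_eq.invol) auto
  then show ?case by simp
next
  case (comm u v i j)
  have "cox_eq n ((a @ u) @ [i, j, i, j] @ (v @ b)) ((a @ u) @ (v @ b))"
    using comm by (intro cox_eq.comm) auto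
  then show ?case by simp
qed

lemma cox_class_eq: "cox_eq n u v \<Longrightarrow> cox_class n u = cox_class n v"
  unfolding cox_class_def by (auto intro: cox_eq.trans cox_eq.sym)

lemma rep_eq: "w \<in> words n \<Longrightarrow> cox_eq n w (cox_rep (cox_class n w))"
  unfolding cox_rep_def cox_class_def mem_Collect_eq by (rule someI[of _ w]) (auto intro: cox_eq.refl)

lemma rep_words: "w \<in> words n \<Longrightarrow> cox_rep (cox_class n w) \<in> words n"
  using rep_eq cox_eq_words by blast

lemma class_rep: "w \<in> words n \<Longrightarrow> cox_class n (cox_rep (cox_class n w)) = cox_class n w"
  using rep_eq cox_class_eq by metis

lemma mult_class: assumes "a \<in> words n" "b \<in> words n"
  shows "cox_class n a \<otimes>\<^bsub>coxeter n\<^esub> cox_class n b = cox_class n (a @ b)"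
proof -
  let ?ra = "cox_rep (cox_class n a)" and ?rb = "cox_rep (cox_class n b)"
  have 1: "cox_eq n (?ra @ ?rb) (a @ ?rb)"
    using cox_eq_cong[OF cox_eq.sym[OF rep_eq[OF assms(1)]], of "[]" ?rb] rep_words[OF assms(2)] by simp
  have 2: "cox_eq n (a @ ?rb) (a @ b)"
    using cox_eq_cong[OF cox_eq.sym[OF rep_eq[OF assms(2)]], of a "[]"] assms by simp
  show ?thesis unfolding coxeter_def using cox_class_eq[OF cox_eq.trans[OF 1 2]] by simp
qed

lemma rev_inv: "a \<in> words n \<Longrightarrow> cox_eq n (rev a @ a) []"
proof (induction a)
  case Nil then show ?case by (auto intro: cox_eq.refl)
next
  case (Cons i a)
  have "cox_eq n (rev a @ [i, i] @ a) (rev a @ a)" using Cons.prems by (intro cox_eq.invol) auto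
  then show ?case using Cons by (auto intro: cox_eq.trans)
qed

lemma carrier_cox: "carrier (coxeter n) = cox_class n ` words n"
  by (simp add: coxeter_def)
lemma one_cox: "\<one>\<^bsub>coxeter n\<^esub> = cox_class n []"
  by (simp add: coxeter_def)

lemma group_cox: "group (coxeter n)"
proof (rule groupI)
  fix x y assume "x \<in> carrier (coxeter n)" "y \<in> carrier (coxeter n)"
  then show "x \<otimes>\<^bsub>coxeter n\<^esub> y \<in> carrier (coxeter n)"
    by (auto simp: carrier_cox mult_class)
next
  show "\<one>\<^bsub>coxeter n\<^esub> \<in> carrier (coxeter n)" by (auto simp: carrier_cox one_cox)
next
  fix x y z assume "x \<in> carrier (coxeter n)" "y \<in> carrier (coxeter n)" "z \<in> carrier (coxeter n)"
  then show "x \<otimes>\<^bsub>coxeter n\<^esub> y \<otimes>\<^bsub>coxeter n\<^esub> z = x \<otimes>\<^bsub>coxeter n\<^esub> (y \<otimes>\<^bsub>coxeter n\<^esub> z)"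
    by (auto simp: carrier_cox mult_class)
next
  fix x assume "x \<in> carrier (coxeter n)"
  then show "\<one>\<^bsub>coxeter n\<^esub> \<otimes>\<^bsub>coxeter n\<^esub> x = x"
    by (auto simp: carrier_cox mult_class one_cox)
next
  fix x assume "x \<in> carrier (coxeter n)"
  then obtain a where a: "a \<in> words n" "x = cox_class n a" by (auto simp: carrier_cox)
  then show "\<exists>y\<in>carrier (coxeter n). y \<otimes>\<^bsub>coxeter n\<^esub> x = \<one>\<^bsub>coxeter n\<^esub>"
    by (intro bexI[of _ "cox_class n (rev a)"])
       (use rev_inv[OF a(1)] in \<open>auto simp: carrier_cox mult_class one_cox dest: cox_class_eq\<close>)
qed



definition resp :: "nat \<Rightarrow> 'a set \<Rightarrow> (nat \<Rightarrow> 'a \<Rightarrow> 'a) \<Rightarrow> bool" where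
  "resp m F adj \<longleftrightarrow> (\<forall>i<m. \<forall>x\<in>F. adj i x \<in> F) \<and>
     (\<forall>u v x. cox_eq m u v \<longrightarrow> x \<in> F \<longrightarrow> word_act adj u x = word_act adj v x)"

lemma word_act_append[simp]: "word_act adj (u @ v) x = word_act adj u (word_act adj v x)"
  by (simp add: word_act_def)
lemma word_act_Cons[simp]: "word_act adj (i # v) x = adj i (word_act adj v x)"
  by (simp add: word_act_def)
lemma word_act_Nil[simp]: "word_act adj [] x = x"
  by (simp add: word_act_def)

lemma word_act_closed: "(\<forall>i<m. \<forall>x\<in>F. adj i x \<in> F) \<Longrightarrow> w \<in> words m \<Longrightarrow> x \<in> F \<Longrightarrow> word_act adj w x \<in> F"
  by (induction w) auto

lemma premaniplex_resp: assumes "premaniplex m F adj" shows "resp m F adj"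
proof -
  have cl: "\<forall>i<m. \<forall>x\<in>F. adj i x \<in> F" using assms by (simp add: premaniplex_def)
  have "cox_eq m u v \<Longrightarrow> x \<in> F \<Longrightarrow> word_act adj u x = word_act adj v x" for u v x
  proof (induction arbitrary: x rule: cox_eq.induct)
    case (invol u v i)
    have "word_act adj v x \<in> F" using word_act_closed[OF cl invol(2,4)] .
    then show ?case using assms invol by (simp add: premaniplex_def)
  next
    case (comm u v i j)
    have "word_act adj v x \<in> F" using word_act_closed[OF cl comm(2,6)] .
    then have "adj i (adj j (adj i (adj j (word_act adj v x)))) = word_act adj v x"
      using assms comm(3,4,5) unfolding premaniplex_def by blast
    then show ?case by simp
  qed auto
  then show ?thesis using cl by (simp add: resp_def)
qed

lemma act_class: assumes "resp m F adj" "w \<in> words m" "x \<in> F"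
  shows "cox_act adj (cox_class m w) x = word_act adj w x"
proof -
  have "cox_eq m w (cox_rep (cox_class m w))" using rep_eq[OF assms(2)] .
  then have "word_act adj w x = word_act adj (cox_rep (cox_class m w)) x"
    using assms(1,3) unfolding resp_def by blast
  then show ?thesis by (simp add: cox_act_def)
qed

lemma act_closed: assumes "resp m F adj" "A \<in> carrier (coxeter m)" "x \<in> F"
  shows "cox_act adj A x \<in> F"
proof -
  obtain w where "w \<in> words m" "A = cox_class m w" using assms by (auto simp: carrier_cox)
  then show ?thesis using act_class[OF assms(1) _ assms(3)] assms(1,3) word_act_closed
    unfolding resp_def by auto
qed

lemma act_mult: assumes "resp m F adj" "A \<in> carrier (coxeter m)" "B \<in> carrier (coxeter m)" "x \<in> F"
  shows "cox_act adj (A \<otimes>\<^bsub>coxeter m\<^esub> B) x = cox_act adj A (cox_act adj B x)"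
proof -
  obtain a b where "a \<in> words m" "A = cox_class m a" "b \<in> words m" "B = cox_class m b"
    using assms by (auto simp: carrier_cox)
  moreover have "word_act adj b x \<in> F" using calculation assms(1,4) word_act_closed unfolding resp_def by auto
  ultimately show ?thesis using act_class[OF assms(1)] mult_class assms(4) by simp
qed

lemma act_one: assumes "resp m F adj" "x \<in> F"
  shows "cox_act adj \<one>\<^bsub>coxeter m\<^esub> x = x"
  using act_class[OF assms(1) _ assms(2), of "[]"] by (simp add: one_cox)

lemma gen_carrier: "i < m \<Longrightarrow> cox_gen m i \<in> carrier (coxeter m)"
  by (auto simp: carrier_cox cox_gen_def intro!: image_eqI[of _ _ "[i]"])

lemma act_gen: assumes "resp m F adj" "x \<in> F" "i < m"
  shows "cox_act adj (cox_gen m i) x = adj i x"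
  using act_class[OF assms(1) _ assms(2), of "[i]"] assms(3) by (simp add: cox_gen_def)



locale vsetup =
  fixes n m :: nat
    and FX :: "'a set" and adjX :: "nat \<Rightarrow> 'a \<Rightarrow> 'a"
    and FY :: "'b set" and adjY :: "nat \<Rightarrow> 'b \<Rightarrow> 'b"
    and \<eta> :: "'b \<Rightarrow> nat list set \<Rightarrow> nat list set"
  assumes rX: "resp n FX adjX" and rY: "resp m FY adjY"
    and va: "voltage_assignment n m FY adjY \<eta>"
begin

abbreviation "V \<equiv> vprod_adj m adjX adjY \<eta>"

lemma eta_carrier: "y \<in> FY \<Longrightarrow> \<omega> \<in> carrier (coxeter m) \<Longrightarrow> \<eta> y \<omega> \<in> carrier (coxeter n)"
  using va by (simp add: voltage_assignment_def)

lemma eta_mult: "y \<in> FY \<Longrightarrow> \<omega> \<in> carrier (coxeter m) \<Longrightarrow> \<nu> \<in> carrier (coxeter m) \<Longrightarrow>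
   \<eta> y (\<nu> \<otimes>\<^bsub>coxeter m\<^esub> \<omega>) = \<eta> (cox_act adjY \<omega> y) \<nu> \<otimes>\<^bsub>coxeter n\<^esub> \<eta> y \<omega>"
  using va by (simp add: voltage_assignment_def)

lemma eta_one: assumes "y \<in> FY" shows "\<eta> y \<one>\<^bsub>coxeter m\<^esub> = \<one>\<^bsub>coxeter n\<^esub>"
proof -
  interpret Gm: group "coxeter m" by (rule group_cox)
  interpret Gn: group "coxeter n" by (rule group_cox)
  have c: "\<eta> y \<one>\<^bsub>coxeter m\<^esub> \<in> carrier (coxeter n)" using eta_carrier assms by simp
  have "\<eta> y \<one>\<^bsub>coxeter m\<^esub> = \<eta> y \<one>\<^bsub>coxeter m\<^esub> \<otimes>\<^bsub>coxeter n\<^esub> \<eta> y \<one>\<^bsub>coxeter m\<^esub>"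
    using eta_mult[OF assms Gm.one_closed Gm.one_closed] act_one[OF rY assms] by simp
  then show ?thesis using Gn.l_cancel_one'[OF c c] by simp
qed

lemma word_formula:
  assumes "w \<in> words m" "x \<in> FX" "y \<in> FY"
  shows "word_act V w (x, y) = (cox_act adjX (\<eta> y (cox_class m w)) x, word_act adjY w y)"
  using assms(1)
proof (induction w)
  case Nil
  show ?case using eta_one[OF assms(3)] act_one[OF rX assms(2)] by (simp add: one_cox)
next
  case (Cons i w)
  have i: "i < m" and w: "w \<in> words m" using Cons.prems by auto
  have cw: "cox_class m w \<in> carrier (coxeter m)" using w by (simp add: carrier_cox)
  have yw: "cox_act adjY (cox_class m w) y = word_act adjY w y" using act_class[OF rY w assms(3)] .
  have yF: "word_act adjY w y \<in> FY" using yw act_closed[OF rY cw assms(3)] by simp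
  have cl: "cox_class m (i # w) = cox_gen m i \<otimes>\<^bsub>coxeter m\<^esub> cox_class m w"
    using mult_class[of "[i]" m w] i w by (simp add: cox_gen_def)
  have e: "\<eta> y (cox_class m (i # w)) = \<eta> (word_act adjY w y) (cox_gen m i) \<otimes>\<^bsub>coxeter n\<^esub> \<eta> y (cox_class m w)"
    using eta_mult[OF assms(3) cw gen_carrier[OF i]] cl yw by simp
  have "cox_act adjX (\<eta> y (cox_class m (i # w))) x =
        cox_act adjX (\<eta> (word_act adjY w y) (cox_gen m i)) (cox_act adjX (\<eta> y (cox_class m w)) x)"
    unfolding e by (rule act_mult[OF rX eta_carrier[OF yF gen_carrier[OF i]] eta_carrier[OF assms(3) cw] assms(2)])
  then show ?case using Cons.IH[OF w] by (simp add: vprod_adj_def)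
qed

lemma resp_V: "resp m (FX \<times> FY) V"
  unfolding resp_def
proof (intro conjI allI impI ballI)
  fix i p assume i: "i < m" and p: "p \<in> FX \<times> FY"
  then show "V i p \<in> FX \<times> FY"
    using act_closed[OF rX eta_carrier[OF _ gen_carrier[OF i]]] rY i unfolding resp_def
    by (auto simp: vprod_adj_def)
next
  fix u v p assume uv: "cox_eq m u v" and p: "p \<in> FX \<times> FY"
  obtain x y where xy: "p = (x, y)" "x \<in> FX" "y \<in> FY" using p by auto
  have "u \<in> words m" "v \<in> words m" using cox_eq_words[OF uv] by auto
  moreover have "cox_class m u = cox_class m v" using cox_class_eq[OF uv] .
  moreover have "word_act adjY u y = word_act adjY v y" using rY uv xy unfolding resp_def by blast
  ultimately show "word_act V u p = word_act V v p" using word_formula xy by simp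
qed

lemma act_V: assumes "\<omega> \<in> carrier (coxeter m)" "x \<in> FX" "y \<in> FY"
  shows "cox_act V \<omega> (x, y) = (cox_act adjX (\<eta> y \<omega>) x, cox_act adjY \<omega> y)"
proof -
  obtain w where w: "w \<in> words m" "\<omega> = cox_class m w" using assms by (auto simp: carrier_cox)
  show ?thesis using act_class[OF resp_V w(1)] act_class[OF rY w(1) assms(3)] word_formula[OF w(1) assms(2,3)]
    w assms by simp
qed

end



context vsetup begin

lemma fib:
  assumes "\<omega> \<in> carrier (coxeter m)" "x0 \<in> FX" "y0 \<in> FY"
  shows "{\<nu> \<in> carrier (coxeter m). cox_act V \<nu> (x0, y0) = cox_act V \<omega> (x0, y0)}
         = \<omega> <#\<^bsub>coxeter m\<^esub> stab m V (x0, y0)"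
proof -
  interpret G: group "coxeter m" by (rule group_cox)
  have p0: "(x0, y0) \<in> FX \<times> FY" using assms by simp
  note am = act_mult[OF resp_V _ _ p0]
  show ?thesis
  proof (intro equalityI subsetI)
    fix \<nu> assume "\<nu> \<in> {\<nu> \<in> carrier (coxeter m). cox_act V \<nu> (x0, y0) = cox_act V \<omega> (x0, y0)}"
    then have \<nu>: "\<nu> \<in> carrier (coxeter m)" "cox_act V \<nu> (x0, y0) = cox_act V \<omega> (x0, y0)" by auto
    define h where "h = inv\<^bsub>coxeter m\<^esub> \<omega> \<otimes>\<^bsub>coxeter m\<^esub> \<nu>"
    have hc: "h \<in> carrier (coxeter m)" using \<nu> assms by (simp add: h_def)
    have "cox_act V h (x0, y0) = cox_act V (inv\<^bsub>coxeter m\<^esub> \<omega>) (cox_act V \<omega> (x0, y0))"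
      unfolding h_def using am \<nu> assms by simp
    also have "\<dots> = cox_act V (inv\<^bsub>coxeter m\<^esub> \<omega> \<otimes>\<^bsub>coxeter m\<^esub> \<omega>) (x0, y0)"
      using am[of "inv\<^bsub>coxeter m\<^esub> \<omega>" \<omega>] assms by simp
    also have "\<dots> = (x0, y0)" using assms act_one[OF resp_V p0] by simp
    finally have "h \<in> stab m V (x0, y0)" using hc by (simp add: stab_def)
    moreover have "\<nu> = \<omega> \<otimes>\<^bsub>coxeter m\<^esub> h" using assms \<nu>
      by (simp add: h_def G.m_assoc[symmetric])
    ultimately show "\<nu> \<in> \<omega> <#\<^bsub>coxeter m\<^esub> stab m V (x0, y0)" by (auto simp: l_coset_def)
  next
    fix \<nu> assume "\<nu> \<in> \<omega> <#\<^bsub>coxeter m\<^esub> stab m V (x0, y0)"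
    then obtain h where h: "h \<in> carrier (coxeter m)" "cox_act V h (x0, y0) = (x0, y0)"
       "\<nu> = \<omega> \<otimes>\<^bsub>coxeter m\<^esub> h" by (auto simp: l_coset_def stab_def)
    then show "\<nu> \<in> {\<nu> \<in> carrier (coxeter m). cox_act V \<nu> (x0, y0) = cox_act V \<omega> (x0, y0)}"
      using am assms by simp
  qed
qed

end

theorem lemma5p2:
  fixes n m :: nat
    and FX :: "'a set" and adjX :: "nat \<Rightarrow> 'a \<Rightarrow> 'a" and x0 :: 'a
    and FY :: "'b set" and adjY :: "nat \<Rightarrow> 'b \<Rightarrow> 'b" and y0 :: 'b
    and \<eta> :: "'b \<Rightarrow> nat list set \<Rightarrow> nat list set"
  assumes "premaniplex n FX adjX" and "pm_connected n FX adjX" and "x0 \<in> FX"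
    and "voltage_operator n m FY adjY \<eta>" and "pm_connected m FY adjY" and "y0 \<in> FY"
  defines "N \<equiv> stab n adjX x0"
    and "L \<equiv> stab m adjY y0"
    and "\<zeta> \<equiv> (\<lambda>\<omega>. \<eta> y0 \<omega>)"
  shows "stab m (vprod_adj m adjX adjY \<eta>) (x0, y0) = {\<omega> \<in> L. \<zeta> \<omega> \<in> N}
     \<and> (pm_connected m (vprod_flags FX FY) (vprod_adj m adjX adjY \<eta>) \<longrightarrow>
         (\<exists>\<phi>. pm_iso m (vprod_flags FX FY) (vprod_adj m adjX adjY \<eta>)
                 (coset_flags m {\<omega> \<in> L. \<zeta> \<omega> \<in> N}) (coset_adj m)  \<phi>
              \<and> \<phi> (x0, y0) = {\<omega> \<in> L. \<zeta> \<omega> \<in> N}))"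
proof -
  interpret vsetup n m FX adjX FY adjY \<eta>
    using assms(1,4) premaniplex_resp[of n FX adjX] premaniplex_resp[of m FY adjY]
    by unfold_locales (auto simp: voltage_operator_def)
  interpret G: group "coxeter m" by (rule group_cox)
  let ?K = "stab m V (x0, y0)"
  have p0: "(x0, y0) \<in> FX \<times> FY" using assms by simp
  have part1: "?K = {\<omega> \<in> L. \<zeta> \<omega> \<in> N}"
  proof (intro equalityI subsetI)
    fix \<omega> assume "\<omega> \<in> ?K"
    then have c: "\<omega> \<in> carrier (coxeter m)" and "cox_act V \<omega> (x0, y0) = (x0, y0)" by (auto simp: stab_def)
    then have "cox_act adjX (\<eta> y0 \<omega>) x0 = x0" "cox_act adjY \<omega> y0 = y0"
      using act_V[OF c assms(3,6)] by auto
    then show "\<omega> \<in> {\<omega> \<in> L. \<zeta> \<omega> \<in> N}" using c eta_carrier[OF assms(6) c]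
      unfolding stab_def L_def N_def \<zeta>_def by blast
  next
    fix \<omega> assume "\<omega> \<in> {\<omega> \<in> L. \<zeta> \<omega> \<in> N}"
    then have c: "\<omega> \<in> carrier (coxeter m)" and "cox_act adjX (\<eta> y0 \<omega>) x0 = x0" "cox_act adjY \<omega> y0 = y0"
      unfolding stab_def L_def N_def \<zeta>_def by auto
    then show "\<omega> \<in> ?K" using act_V[OF c assms(3,6)] unfolding stab_def by simp
  qed
  have Kc: "?K \<subseteq> carrier (coxeter m)" by (auto simp: stab_def)
  have part2: "\<exists>\<phi>. pm_iso m (vprod_flags FX FY) V (coset_flags m ?K) (coset_adj m) \<phi> \<and> \<phi> (x0, y0) = ?K"
    if conn: "pm_connected m (vprod_flags FX FY) V"
  proof -
    define \<phi> where "\<phi> p = {\<nu> \<in> carrier (coxeter m). cox_act V \<nu> (x0, y0) = p}" for p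
    have orb: "\<exists>\<omega>\<in>carrier (coxeter m). p = cox_act V \<omega> (x0, y0)" if pP: "p \<in> FX \<times> FY" for p
    proof -
      obtain w where w: "w \<in> words m" "word_act V w (x0, y0) = p"
      proof -
        have "\<forall>x\<in>FX \<times> FY. \<forall>y\<in>FX \<times> FY. \<exists>w\<in>words m. word_act V w x = y"
          using conn unfolding pm_connected_def vprod_flags_def .
        then have "\<exists>w\<in>words m. word_act V w (x0, y0) = p" using p0 pP by blast
        then show thesis using that by blast
      qed
      then show ?thesis using act_class[OF resp_V w(1) p0]
        by (intro bexI[of _ "cox_class m w"]) (auto simp: carrier_cox)
    qed
    have fib': "\<phi> (cox_act V \<omega> (x0, y0)) = \<omega> <#\<^bsub>coxeter m\<^esub> ?K" if "\<omega> \<in> carrier (coxeter m)" for \<omega>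
      using fib[OF that assms(3,6)] by (simp add: \<phi>_def)
    have inj: "inj_on \<phi> (FX \<times> FY)"
    proof (rule inj_onI)
      fix p q assume p: "p \<in> FX \<times> FY" and q: "q \<in> FX \<times> FY" and e: "\<phi> p = \<phi> q"
      obtain \<omega> where \<omega>: "\<omega> \<in> carrier (coxeter m)" "p = cox_act V \<omega> (x0, y0)" using orb[OF p] by blast
      then have "\<omega> \<in> \<phi> p" by (simp add: \<phi>_def)
      then have "\<omega> \<in> \<phi> q" using e by simp
      then show "p = q" using \<omega> by (simp add: \<phi>_def)
    qed
    have img: "\<phi> ` (FX \<times> FY) = coset_flags m ?K"
    proof (intro equalityI subsetI)
      fix C assume "C \<in> \<phi> ` (FX \<times> FY)"
      then obtain p where p: "p \<in> FX \<times> FY" "C = \<phi> p" by blast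
      obtain \<omega> where \<omega>: "\<omega> \<in> carrier (coxeter m)" "p = cox_act V \<omega> (x0, y0)" using orb[OF p(1)] by blast
      show "C \<in> coset_flags m ?K" using fib'[OF \<omega>(1)] \<omega> p by (auto simp: coset_flags_def)
    next
      fix C assume "C \<in> coset_flags m ?K"
      then obtain \<omega> where \<omega>: "\<omega> \<in> carrier (coxeter m)" "C = \<omega> <#\<^bsub>coxeter m\<^esub> ?K"
        by (auto simp: coset_flags_def)
      have "cox_act V \<omega> (x0, y0) \<in> FX \<times> FY" using act_closed[OF resp_V \<omega>(1) p0] .
      then show "C \<in> \<phi> ` (FX \<times> FY)" using fib'[OF \<omega>(1)] \<omega>(2) by (metis image_eqI)
    qed
    have adj: "\<phi> (V i p) = coset_adj m i (\<phi> p)" if i: "i < m" and p: "p \<in> FX \<times> FY" for i p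
    proof -
      obtain \<omega> where \<omega>: "\<omega> \<in> carrier (coxeter m)" "p = cox_act V \<omega> (x0, y0)" using orb[OF p] by blast
      have "V i p = cox_act V (cox_gen m i \<otimes>\<^bsub>coxeter m\<^esub> \<omega>) (x0, y0)"
        using act_mult[OF resp_V gen_carrier[OF i] \<omega>(1) p0] act_gen[OF resp_V p i] \<omega> by simp
      then have "\<phi> (V i p) = (cox_gen m i \<otimes>\<^bsub>coxeter m\<^esub> \<omega>) <#\<^bsub>coxeter m\<^esub> ?K"
        using fib' gen_carrier[OF i] \<omega>(1) by simp
      also have "\<dots> = cox_gen m i <#\<^bsub>coxeter m\<^esub> (\<omega> <#\<^bsub>coxeter m\<^esub> ?K)"
        using G.lcos_m_assoc[OF Kc gen_carrier[OF i] \<omega>(1)] by simp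
      finally show ?thesis using fib'[OF \<omega>(1)] \<omega>(2) by (simp add: coset_adj_def)
    qed
    have "\<phi> (x0, y0) = ?K" by (simp add: \<phi>_def stab_def)
    then show ?thesis using inj img adj
      by (intro exI[of _ \<phi>]) (auto simp: pm_iso_def bij_betw_def vprod_flags_def)
  qed
  show ?thesis using part1 part2 by simp
qed


end
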